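(* Let $\alpha\in(0,\pi/2)$ and $F(\beta)=f_1(\alpha,\beta,r_0(\alpha,\beta))$ for $\beta\in[0,\alpha]$. Then $\frac{d}{d\beta}F(\beta)=0$ for some $0\le\beta\le\alpha$ if and only if $\alpha\in[\pi/6,\pi/3]$ and $$\beta=\tfrac12\arccos\!\left(\frac{-2\cos(4\alpha)+\cos(6\alpha)+2}{3-2\cos(4\alpha)}\right).$$
   Context: $f_1(\alpha,\beta,r)=\frac{2\sin\alpha}{\cos\beta(\tan\alpha+\tan\beta)}\cdot\frac{1+\frac{2\tan\beta}{\tan\alpha+\tan\beta}r}{\sqrt{1+r^2+2\cos(2\alpha)r}}$; with $A=\frac{2\tan\beta}{\tan\alpha+\tan\beta}$ and $B=2\cos(2\alpha)$, $r_0(\alpha,\beta)=\frac{2A-B}{2-AB}$. *)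

theory Defs
  imports "HOL-Analysis.Analysis"
begin

definition f1 :: "real \<Rightarrow> real \<Rightarrow> real \<Rightarrow> real" where
  "f1 \<alpha> \<beta> r =
     (2 * sin \<alpha> / (cos \<beta> * (tan \<alpha> + tan \<beta>))) *
     ((1 + (2 * tan \<beta> / (tan \<alpha> + tan \<beta>)) * r) /
      sqrt (1 + r^2 + 2 * cos (2 * \<alpha>) * r))"

definition coefA :: "real \<Rightarrow> real \<Rightarrow> real" where
  "coefA \<alpha> \<beta> = 2 * tan \<beta> / (tan \<alpha> + tan \<beta>)"

definition coefB :: "real \<Rightarrow> real" where
  "coefB \<alpha> = 2 * cos (2 * \<alpha>)"

definition r0 :: "real \<Rightarrow> real \<Rightarrow> real" where
  "r0 \<alpha> \<beta> = (2 * coefA \<alpha> \<beta> - coefB \<alpha>) / (2 - coefA \<alpha> \<beta> * coefB \<alpha>)"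

definition Fbeta :: "real \<Rightarrow> real \<Rightarrow> real" where
  "Fbeta \<alpha> \<beta> = f1 \<alpha> \<beta> (r0 \<alpha> \<beta>)"

end

theory Submission
  imports Defs
begin

lemma alg_core:
  fixes A C S :: real
  assumes S: "S > 0" and CS: "C^2 + S^2 = 1" and pos: "2 - A * (2*C) > 0"
  shows "(1 + A * ((2*A - 2*C) / (2 - A*(2*C)))) /
           sqrt (1 + ((2*A - 2*C) / (2 - A*(2*C)))^2 + 2*C*((2*A - 2*C) / (2 - A*(2*C))))
         = sqrt ((A - C)^2 + S^2) / S"
proof -
  define D where "D = 2 - A*(2*C)"
  define W where "W = (A - C)^2 + S^2"
  have D: "D > 0" using pos D_def by simp
  have W: "W > 0" using S unfolding W_def by (simp add: add_nonneg_pos)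
  have e1: "1 + A * ((2*A - 2*C) / D) = 2*W/D"
    using D CS unfolding W_def D_def by (simp add: field_simps) (simp add: algebra_simps power2_eq_square)
  have S2: "S^2 = 1 - C^2" using CS by simp
  have n2: "D^2 + (2*A - 2*C)^2 + 2*C*(2*A - 2*C)*D = (2*S)^2 * W"
    unfolding W_def D_def power_mult_distrib S2 by (simp add: power2_eq_square algebra_simps)
  have e2: "1 + ((2*A - 2*C) / D)^2 + 2*C*((2*A - 2*C) / D) = (2*S)^2 * W / D^2"
  proof -
    have "1 + ((2*A - 2*C) / D)^2 + 2*C*((2*A - 2*C) / D) = (D^2 + (2*A - 2*C)^2 + 2*C*(2*A - 2*C)*D) / D^2"
      using D by (simp add: field_simps power2_eq_square)
    then show ?thesis unfolding n2 .
  qed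
  have e3: "sqrt ((2*S)^2 * W / D^2) = 2*S * sqrt W / D"
    using D S W by (simp add: real_sqrt_divide real_sqrt_mult)
  have "sqrt W * sqrt W = W" using W by simp
  then show ?thesis unfolding D_def[symmetric] e1 e2 e3 W_def[symmetric]
    using D S W by (simp add: field_simps)
qed


definition Phi :: "real \<Rightarrow> real \<Rightarrow> real" where
  "Phi a k = sqrt ((1 + k^2) * ((1 - sin (2*a) * k)^2 + sin (2*a)^2))"

lemma closed_form:
  assumes a0: "0 < a" and a1: "a < pi/2" and cx: "cos x > 0" and su: "sin (a + x) > 0"
    and pos: "2 - coefA a x * coefB a > 0"
  shows "Fbeta a x = Phi a (cos (a + x) / sin (a + x))"
proof -
  have sa: "sin a > 0" using a0 a1 by (intro sin_gt_zero) auto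
  have ca: "cos a > 0" using a0 a1 by (intro cos_gt_zero) auto
  define S where "S = sin (2*a)"
  define C where "C = cos (2*a)"
  define A where "A = coefA a x"
  define k where "k = cos (a + x) / sin (a + x)"
  have S0: "S > 0" unfolding S_def using sa ca by (simp add: sin_double)
  have CS: "C^2 + S^2 = 1" unfolding S_def C_def by simp
  have ht: "tan a + tan x = sin (a + x) / (cos a * cos x)"
    using ca cx by (simp add: tan_def sin_add field_simps)
  have hA: "A = 2 * sin x * cos a / sin (a + x)"
    unfolding A_def coefA_def ht using ca cx su by (simp add: tan_def field_simps)
  have hpre: "2 * sin a / (cos x * (tan a + tan x)) = S / sin (a + x)"
    unfolding ht S_def sin_double using ca cx su by (simp add: field_simps)
  have sx: "sin x = sin (a + x) * cos a - cos (a + x) * sin a"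
    using sin_diff[of "a + x" a] by simp
  have AC: "A - C = 1 - S * k"
  proof -
    have "A - C = (2 * sin x * cos a - C * sin (a + x)) / sin (a + x)"
      using hA su by (simp add: field_simps)
    also have "2 * sin x * cos a - C * sin (a + x) = sin (a + x) - S * cos (a + x)"
      unfolding sx C_def S_def cos_double sin_double
      using sin_cos_squared_add[of a] by algebra
    finally show ?thesis unfolding k_def using su by (simp add: field_simps)
  qed
  have Fe: "Fbeta a x = S / sin (a + x) * (sqrt ((A - C)^2 + S^2) / S)"
  proof -
    have "Fbeta a x = 2 * sin a / (cos x * (tan a + tan x)) *
      ((1 + A * ((2*A - 2*C) / (2 - A*(2*C)))) /
           sqrt (1 + ((2*A - 2*C) / (2 - A*(2*C)))^2 + 2*C*((2*A - 2*C) / (2 - A*(2*C)))))"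
      unfolding Fbeta_def f1_def r0_def A_def C_def coefB_def coefA_def by (simp add: mult.assoc)
    also have "\<dots> = S / sin (a + x) * (sqrt ((A - C)^2 + S^2) / S)"
      unfolding hpre using alg_core[OF S0 CS] pos unfolding A_def C_def coefB_def by simp
    finally show ?thesis .
  qed
  have k2: "1 + k^2 = 1 / sin (a + x) ^ 2"
    unfolding k_def using su sin_cos_squared_add[of "a + x"] by (simp add: field_simps)
  have "Phi a k = sqrt (1 + k^2) * sqrt ((1 - S * k)^2 + S^2)"
    unfolding Phi_def S_def by (simp add: real_sqrt_mult)
  also have "sqrt (1 + k^2) = 1 / sin (a + x)"
    unfolding k2 using su by (simp add: real_sqrt_divide)
  finally have "Phi a k = sqrt ((A - C)^2 + S^2) / sin (a + x)" unfolding AC by simp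
  then show ?thesis unfolding Fe k_def[symmetric] using S0 by simp
qed


lemma ev_pos:
  fixes g :: "real \<Rightarrow> real"
  assumes "isCont g b" "g b > 0"
  shows "eventually (\<lambda>x. g x > 0) (nhds b)"
proof -
  have "eventually (\<lambda>x. g x > 0) (at b)"
    using order_tendstoD(1)[OF isContD[OF assms(1)] assms(2)] .
  then have "eventually (\<lambda>x. x \<noteq> b \<longrightarrow> x \<in> UNIV \<longrightarrow> g x > 0) (nhds b)"
    using eventually_at_filter[of _ b UNIV] by simp
  then show ?thesis by (rule eventually_mono) (use assms(2) in auto)
qed

lemma deriv_Phi:
  assumes S: "sin (2*a) > 0"
  shows "DERIV (Phi a) k :>
    (2 * (2 * sin (2*a)^2 * k^3 - 3 * sin (2*a) * k^2 + (1 + 2 * sin (2*a)^2) * k - sin (2*a)))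
    / (2 * sqrt ((1 + k^2) * ((1 - sin (2*a) * k)^2 + sin (2*a)^2)))"
proof -
  define S where "S = sin (2*a)"
  have G: "(1 + k^2) * ((1 - S * k)^2 + S^2) > 0"
    using S unfolding S_def by (intro mult_pos_pos) (auto intro: add_nonneg_pos add_pos_nonneg)
  have "DERIV (\<lambda>k. sqrt ((1 + k^2) * ((1 - S * k)^2 + S^2))) k :>
     inverse (sqrt ((1 + k^2) * ((1 - S * k)^2 + S^2))) / 2 *
      ((2 * k ^ 1 * 1) * ((1 - S * k)^2 + S^2) + (1 + k^2) * (2 * (1 - S * k) ^ 1 * (0 - S * 1) + 0))"
    using G by (auto intro!: derivative_eq_intros)
  then show ?thesis unfolding Phi_def S_def[symmetric]
    using G by (simp add: field_simps power2_eq_square power3_eq_cube)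
qed

lemma deriv_cot:
  fixes a b :: real
  assumes "sin (a + b) \<noteq> 0"
  shows "DERIV (\<lambda>x. cos (a + x) / sin (a + x)) b :> - 1 / sin (a + b)^2"
proof -
  have eq: "(- sin (a + b) * (0 + 1) * sin (a + b) - cos (a + b) * (cos (a + b) * (0 + 1))) / (sin (a + b) * sin (a + b))
     = - 1 / sin (a + b)^2"
  proof -
    have n: "- (sin (a + b) * sin (a + b)) - cos (a + b) * cos (a + b) = -1"
      using sin_cos_squared_add[of "a + b"] by (simp add: power2_eq_square algebra_simps)
    show ?thesis by (simp add: n power2_eq_square)
  qed
  show ?thesis unfolding eq[symmetric]
    using assms by (auto intro!: derivative_eq_intros)
qed

lemma key_trig:
  fixes a b :: real
  assumes "sin (a + b) = 2 * sin (2*a) * cos (a + b)"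
  shows "cos (2*b) * (3 - 2 * cos (4*a)) = - 2 * cos (4*a) + cos (6*a) + 2"
proof -
  have c4: "cos (4*a) = 2 * cos (2*a)^2 - 1" using cos_double_cos[of "2*a"] by simp
  have c6: "cos (6*a) = 4 * cos (2*a)^3 - 3 * cos (2*a)" using cos_treble_cos[of "2*a"] by simp
  show ?thesis using assms unfolding c4 c6 cos_double sin_double sin_add cos_add
    using sin_cos_squared_add[of a] sin_cos_squared_add[of b] by algebra
qed


lemma mpos:
  fixes m C S :: real
  assumes "C^2 + S^2 = 1" "S > 0" "C \<le> m" "m \<le> 1 + C"
  shows "m^2 - m + S^2 > 0"
proof -
  have "C^2 < 1" using assms(1) zero_less_power[OF assms(2), of 2] by linarith
  then have "\<bar>C\<bar> < 1" by (simp add: abs_square_less_1)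
  then have C1: "C < 1" "C > -1" by auto
  consider "C \<ge> 1/2" | "C \<le> -1/2" | "-1/2 < C \<and> C < 1/2" by linarith
  then show ?thesis
  proof cases
    case 1
    have "(m - C) * (m + C - 1) \<ge> 0" using 1 assms by (intro mult_nonneg_nonneg) auto
    then show ?thesis using assms(1) C1 by (simp add: power2_eq_square algebra_simps)
  next
    case 2
    have "(1 + C - m) * (- m - C) \<ge> 0" using 2 assms by (intro mult_nonneg_nonneg) auto
    then show ?thesis using assms(1) C1 by (simp add: power2_eq_square algebra_simps)
  next
    case 3
    have "(1/2 - C) * (1/2 + C) > 0" using 3 by (intro mult_pos_pos) auto
    then have "C^2 < 1/4" by (simp add: power2_eq_square algebra_simps)
    moreover have "(m - 1/2)^2 \<ge> 0" by simp
    ultimately show ?thesis using assms(1) by (simp add: power2_eq_square algebra_simps)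
  qed
qed

theorem lemma10:
  fixes \<alpha> \<beta> :: real
  assumes "0 < \<alpha>" and "\<alpha> < pi / 2"
    and "0 \<le> \<beta>" and "\<beta> \<le> \<alpha>"
  shows "deriv (Fbeta \<alpha>) \<beta> = 0 \<longleftrightarrow>
           (pi / 6 \<le> \<alpha> \<and> \<alpha> \<le> pi / 3 \<and>
            \<beta> = arccos ((- 2 * cos (4 * \<alpha>) + cos (6 * \<alpha>) + 2) / (3 - 2 * cos (4 * \<alpha>))) / 2)"
proof -
  define a where "a = \<alpha>"
  have a0: "0 < a" and a1: "a < pi/2" using assms unfolding a_def by auto
  define S where "S = sin (2*a)"
  define C where "C = cos (2*a)"
  define c where "c = (- 2 * cos (4 * a) + cos (6 * a) + 2) / (3 - 2 * cos (4 * a))"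
  define mf where "mf = (\<lambda>x. S * cos (a + x) / sin (a + x))"
  have sa: "sin a > 0" using a0 a1 by (intro sin_gt_zero) auto
  have ca: "cos a > 0" using a0 a1 by (intro cos_gt_zero) auto
  have S0: "S > 0" unfolding S_def using sa ca by (simp add: sin_double)
  have CS: "C^2 + S^2 = 1" unfolding S_def C_def by simp
  have Csq: "C^2 < 1" using CS zero_less_power[OF S0, of 2] by linarith
  then have "\<bar>C\<bar> < 1" by (simp add: abs_square_less_1)
  then have C1: "C < 1" "C > -1" by auto
  have c4: "cos (4*a) = 2 * C^2 - 1" using cos_double_cos[of "2*a"] unfolding C_def by simp
  have den: "3 - 2 * cos (4*a) > 0" unfolding c4 using Csq by simp
  have su_pos: "sin (a + x) > 0" if "0 \<le> x" "x \<le> a" for x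
    using that a0 a1 by (intro sin_gt_zero) auto
  have m_lo: "C \<le> mf x" if "0 \<le> x" "x \<le> a" for x
  proof -
    have "S * cos (a + x) - C * sin (a + x) = sin (a - x)"
      unfolding S_def C_def sin_double cos_double sin_add cos_add sin_diff
      using sin_cos_squared_add[of a] by algebra
    moreover have "sin (a - x) \<ge> 0" using that a1 by (intro sin_ge_zero) auto
    ultimately show ?thesis unfolding mf_def using su_pos[OF that] by (simp add: field_simps)
  qed
  have m_hi: "mf x \<le> 1 + C" if "0 \<le> x" "x \<le> a" for x
  proof -
    have "(1 + C) * sin (a + x) - S * cos (a + x) = 2 * cos a * sin x"
      unfolding S_def C_def sin_double cos_double sin_add cos_add
      using sin_cos_squared_add[of a] by algebra
    moreover have "sin x \<ge> 0" using that a1 by (intro sin_ge_zero) auto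
    ultimately show ?thesis unfolding mf_def using su_pos[OF that] ca
      by (simp add: field_simps)
  qed
  have key: "cos (2*x) = c" if "0 \<le> x" "x \<le> a" "mf x = 1/2" for x
  proof -
    have "sin (a + x) = 2 * sin (2*a) * cos (a + x)"
      using that(3) su_pos[OF that(1,2)] unfolding mf_def S_def by (simp add: field_simps)
    from key_trig[OF this] show ?thesis unfolding c_def using den by (simp add: field_simps)
  qed
  define b where "b = \<beta>"
  have b0: "0 \<le> b" and b1: "b \<le> a" using assms unfolding a_def b_def by auto
  define k where "k = cos (a + b) / sin (a + b)"
  have sub: "sin (a + b) > 0" using su_pos[OF b0 b1] .
  have cb: "cos b > 0" using b0 b1 a1 by (intro cos_gt_zero_pi) auto
  have mk: "mf b = S * k" unfolding mf_def k_def by simp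
  have Ab: "coefA a b = 1 + C - mf b"
  proof -
    have ht: "tan a + tan b = sin (a + b) / (cos a * cos b)"
      using ca cb by (simp add: tan_def sin_add field_simps)
    have "coefA a b = 2 * sin b * cos a / sin (a + b)"
      unfolding coefA_def ht using ca cb sub by (simp add: tan_def field_simps)
    moreover have "(1 + C) * sin (a + b) - S * cos (a + b) = 2 * cos a * sin b"
      unfolding S_def C_def sin_double cos_double sin_add cos_add
      using sin_cos_squared_add[of a] by algebra
    ultimately show ?thesis unfolding mf_def using sub by (simp add: field_simps)
  qed
  have posb: "2 - coefA a b * coefB a > 0"
  proof -
    have "0 \<le> coefA a b" "coefA a b \<le> 1" using Ab m_lo[OF b0 b1] m_hi[OF b0 b1] by auto
    then have "coefA a b * C < 1"
    proof (cases "C \<le> 0")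
      case True
      then have "coefA a b * C \<le> 0" using \<open>0 \<le> coefA a b\<close> by (simp add: mult_nonneg_nonpos)
      then show ?thesis by simp
    next
      case False
      then have "coefA a b * C \<le> 1 * C" using \<open>coefA a b \<le> 1\<close> by (intro mult_right_mono) auto
      then show ?thesis using C1 by simp
    qed
    then show ?thesis unfolding coefB_def C_def[symmetric] by simp
  qed
  have contA: "isCont (\<lambda>x. 2 - coefA a x * coefB a) b"
  proof -
    have "tan a + tan b > 0" using ca cb sub by (simp add: tan_def sin_add field_simps)
    then show ?thesis unfolding coefA_def using cb ca
      by (auto intro!: continuous_intros simp: cos_gt_zero)
  qed
  have ev: "eventually (\<lambda>x. Fbeta a x = Phi a (cos (a + x) / sin (a + x))) (nhds b)"
  proof -
    have e1: "eventually (\<lambda>x. cos x > 0) (nhds b)" by (rule ev_pos) (use cb in \<open>auto intro!: continuous_intros\<close>)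
    have e2: "eventually (\<lambda>x. sin (a + x) > 0) (nhds b)" by (rule ev_pos) (use sub in \<open>auto intro!: continuous_intros\<close>)
    have e3: "eventually (\<lambda>x. 2 - coefA a x * coefB a > 0) (nhds b)" by (rule ev_pos[OF contA posb])
    show ?thesis using e1 e2 e3 by eventually_elim (rule closed_form[OF a0 a1], auto)
  qed
  define G where "G = (1 + k^2) * ((1 - S * k)^2 + S^2)"
  define Gp where "Gp = 2 * (2 * S^2 * k^3 - 3 * S * k^2 + (1 + 2 * S^2) * k - S)"
  have Gpos: "G > 0"
    using S0 unfolding G_def by (intro mult_pos_pos) (auto intro: add_nonneg_pos add_pos_nonneg)
  have D1: "DERIV (\<lambda>x. Phi a (cos (a + x) / sin (a + x))) b :> Gp / (2 * sqrt G) * (- 1 / sin (a + b)^2)"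
    using DERIV_chain2[OF deriv_Phi[OF S0[unfolded S_def]] deriv_cot[of a b]] sub
    unfolding k_def[symmetric] G_def Gp_def S_def by simp
  have D2: "DERIV (Fbeta a) b :> Gp / (2 * sqrt G) * (- 1 / sin (a + b)^2)"
    using DERIV_cong_ev[OF refl ev refl] D1 by simp
  have dv: "deriv (Fbeta \<alpha>) \<beta> = Gp / (2 * sqrt G) * (- 1 / sin (a + b)^2)"
    using DERIV_imp_deriv[OF D2] unfolding a_def b_def .
  have fac: "S * Gp = 2 * (2 * mf b - 1) * ((mf b)^2 - mf b + S^2)"
    unfolding mk Gp_def by (simp add: power2_eq_square power3_eq_cube algebra_simps)
  have mp: "(mf b)^2 - mf b + S^2 > 0" by (rule mpos[OF CS S0 m_lo[OF b0 b1] m_hi[OF b0 b1]])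
  have iff1: "deriv (Fbeta \<alpha>) \<beta> = 0 \<longleftrightarrow> mf b = 1/2"
  proof -
    have "deriv (Fbeta \<alpha>) \<beta> = 0 \<longleftrightarrow> Gp = 0" unfolding dv using Gpos sub by simp
    also have "\<dots> \<longleftrightarrow> S * Gp = 0" using S0 by simp
    also have "\<dots> \<longleftrightarrow> mf b = 1/2" unfolding fac using mp by auto
    finally show ?thesis .
  qed
  have range_iff: "C \<le> 1/2 \<and> -1/2 \<le> C \<longleftrightarrow> pi/6 \<le> a \<and> a \<le> pi/3"
  proof -
    have "C \<le> 1/2 \<longleftrightarrow> cos (2*a) \<le> cos (pi/3)" unfolding C_def cos_60 ..
    also have "\<dots> \<longleftrightarrow> pi/3 \<le> 2*a" using a0 a1 by (intro cos_mono_le_eq) auto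
    finally have r1: "C \<le> 1/2 \<longleftrightarrow> pi/6 \<le> a" by (simp add: algebra_simps)
    have "-1/2 \<le> C \<longleftrightarrow> cos (2*pi/3) \<le> cos (2*a)" unfolding C_def cos_120 ..
    also have "\<dots> \<longleftrightarrow> 2*a \<le> 2*pi/3" using a0 a1 by (intro cos_mono_le_eq) auto
    finally have r2: "-1/2 \<le> C \<longleftrightarrow> a \<le> pi/3" by (simp add: algebra_simps)
    show ?thesis using r1 r2 by simp
  qed
  have rhs: "(pi / 6 \<le> \<alpha> \<and> \<alpha> \<le> pi / 3 \<and>
            \<beta> = arccos ((- 2 * cos (4 * \<alpha>) + cos (6 * \<alpha>) + 2) / (3 - 2 * cos (4 * \<alpha>))) / 2)
        \<longleftrightarrow> (pi/6 \<le> a \<and> a \<le> pi/3 \<and> b = arccos c / 2)"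
    unfolding a_def b_def c_def ..
  have ac: "arccos (cos (2*x)) = 2*x" if "0 \<le> x" "x \<le> a" for x
    using that a1 by (intro arccos_cos) auto
  show ?thesis unfolding iff1 rhs
  proof
    assume m: "mf b = 1/2"
    have "C \<le> 1/2 \<and> -1/2 \<le> C" using m_lo[OF b0 b1] m_hi[OF b0 b1] m by simp
    then have "pi/6 \<le> a \<and> a \<le> pi/3" using range_iff by simp
    moreover have "b = arccos c / 2" using key[OF b0 b1 m] ac[OF b0 b1] by simp
    ultimately show "pi/6 \<le> a \<and> a \<le> pi/3 \<and> b = arccos c / 2" by simp
  next
    assume h: "pi/6 \<le> a \<and> a \<le> pi/3 \<and> b = arccos c / 2"
    then have rng: "C \<le> 1/2" "-1/2 \<le> C" using range_iff by auto
    have cont: "continuous_on {0..a} mf"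
      unfolding mf_def using su_pos by (auto intro!: continuous_intros simp: less_imp_neq[symmetric])
    have ma: "mf a = C" unfolding mf_def S_def C_def using su_pos[of a] a0
      by (simp add: field_simps mult_2)
    have m0: "mf 0 = 1 + C" unfolding mf_def S_def C_def sin_double cos_double_cos
      using sa ca by (simp add: field_simps power2_eq_square)
    obtain x where x: "0 \<le> x" "x \<le> a" "mf x = 1/2"
      using IVT2'[of mf a "1/2" 0, OF _ _ _ cont] ma m0 rng a0 by auto
    have "2*x = arccos c" using key[OF x] ac[OF x(1,2)] by simp
    then have "x = b" using h by simp
    then show "mf b = 1/2" using x by simp
  qed
qed

end
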